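(* Let $G$ be a finite group. Then $G/[\epsilon_i,G]$ is a nested GVZ-group for every integer $i\ge 1$. Moreover, $G$ is a nested GVZ-group if and only if $\epsilon_\infty=1$.
   Context: All groups are finite. For $\chi\in\mathrm{Irr}(G)$, the center of $\chi$ is $Z(\chi)=\{g\in G : |\chi(g)|=\chi(1)\}$. A group is nested if for any two of its irreducible characters $\chi,\psi$ either $Z(\chi)\le Z(\psi)$ or $Z(\psi)\le Z(\chi)$. A group is a GVZ-group if every irreducible character vanishes on the complement of its center. For a normal subgroup $N$ of $G$, $\mathrm{Irr}(G\mid N)$ is the set of $\chi\in\mathrm{Irr}(G)$ with $N\not\le\ker(\chi)$, and $V(G\mid N)$ is the subgroup generated by all $g\in G$ such that $\chi(g)\neq0$ for some $\chi\in\mathrm{Irr}(G\mid N)$ (so $V(G\mid 1)=1$). Define $\epsilon_1=G$ and $\epsilon_{i+1}=V(G\mid[\epsilon_i,G])$ for $i\ge1$. This is a descending chain of normal subgroups which stabilizes; $\epsilon_\infty$ denotes its terminal term. *)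

theory Defs
  imports "HOL-Algebra.Algebra" "Jordan_Normal_Form.Matrix"
begin

definition is_rep :: "('g, 'b) monoid_scheme \<Rightarrow> nat \<Rightarrow> ('g \<Rightarrow> complex mat) \<Rightarrow> bool" where
  "is_rep G n \<rho> \<longleftrightarrow> n > 0 \<and> (\<forall>g \<in> carrier G. \<rho> g \<in> carrier_mat n n)
     \<and> \<rho> \<one>\<^bsub>G\<^esub> = 1\<^sub>m n
     \<and> (\<forall>x \<in> carrier G. \<forall>y \<in> carrier G. \<rho> (x \<otimes>\<^bsub>G\<^esub> y) = \<rho> x * \<rho> y)"

definition is_subspace :: "nat \<Rightarrow> complex vec set \<Rightarrow> bool" where
  "is_subspace n W \<longleftrightarrow> W \<subseteq> carrier_vec n \<and> 0\<^sub>v n \<in> W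
     \<and> (\<forall>v \<in> W. \<forall>w \<in> W. v + w \<in> W) \<and> (\<forall>c. \<forall>v \<in> W. c \<cdot>\<^sub>v v \<in> W)"

definition is_irrep :: "('g, 'b) monoid_scheme \<Rightarrow> nat \<Rightarrow> ('g \<Rightarrow> complex mat) \<Rightarrow> bool" where
  "is_irrep G n \<rho> \<longleftrightarrow> is_rep G n \<rho> \<and>
     (\<forall>W. is_subspace n W \<and> (\<forall>g \<in> carrier G. \<forall>w \<in> W. \<rho> g *\<^sub>v w \<in> W)
          \<longrightarrow> W = {0\<^sub>v n} \<or> W = carrier_vec n)"

definition mat_trace :: "complex mat \<Rightarrow> complex" where
  "mat_trace A = (\<Sum>i < dim_row A. A $$ (i, i))"

text \<open>Irr(G): characters of irreducible complex representations (set to 0 off the carrier).\<close>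
definition Irr :: "('g, 'b) monoid_scheme \<Rightarrow> ('g \<Rightarrow> complex) set" where
  "Irr G = {\<chi>. \<exists>n \<rho>. is_irrep G n \<rho> \<and>
              \<chi> = (\<lambda>g. if g \<in> carrier G then mat_trace (\<rho> g) else 0)}"

definition char_center :: "('g, 'b) monoid_scheme \<Rightarrow> ('g \<Rightarrow> complex) \<Rightarrow> 'g set" where
  "char_center G \<chi> = {g \<in> carrier G. cmod (\<chi> g) = cmod (\<chi> \<one>\<^bsub>G\<^esub>)}"

definition char_kernel :: "('g, 'b) monoid_scheme \<Rightarrow> ('g \<Rightarrow> complex) \<Rightarrow> 'g set" where
  "char_kernel G \<chi> = {g \<in> carrier G. \<chi> g = \<chi> \<one>\<^bsub>G\<^esub>}"

definition nested_group :: "('g, 'b) monoid_scheme \<Rightarrow> bool" where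
  "nested_group G \<longleftrightarrow> (\<forall>\<chi> \<in> Irr G. \<forall>\<psi> \<in> Irr G.
      char_center G \<chi> \<subseteq> char_center G \<psi> \<or> char_center G \<psi> \<subseteq> char_center G \<chi>)"

definition GVZ_group :: "('g, 'b) monoid_scheme \<Rightarrow> bool" where
  "GVZ_group G \<longleftrightarrow> (\<forall>\<chi> \<in> Irr G. \<forall>g \<in> carrier G - char_center G \<chi>. \<chi> g = 0)"

definition Irr_rel :: "('g, 'b) monoid_scheme \<Rightarrow> 'g set \<Rightarrow> ('g \<Rightarrow> complex) set" where
  "Irr_rel G N = {\<chi> \<in> Irr G. \<not> N \<subseteq> char_kernel G \<chi>}"

definition V_rel :: "('g, 'b) monoid_scheme \<Rightarrow> 'g set \<Rightarrow> 'g set" where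
  "V_rel G N = generate G {g \<in> carrier G. \<exists>\<chi> \<in> Irr_rel G N. \<chi> g \<noteq> 0}"

definition comm_sub :: "('g, 'b) monoid_scheme \<Rightarrow> 'g set \<Rightarrow> 'g set \<Rightarrow> 'g set" where
  "comm_sub G A B = generate G (\<Union>a \<in> A. \<Union>b \<in> B.
      {inv\<^bsub>G\<^esub> a \<otimes>\<^bsub>G\<^esub> inv\<^bsub>G\<^esub> b \<otimes>\<^bsub>G\<^esub> a \<otimes>\<^bsub>G\<^esub> b})"

text \<open>eps_aux G k = \<epsilon>_(k+1)\<close>
primrec eps_aux :: "('g, 'b) monoid_scheme \<Rightarrow> nat \<Rightarrow> 'g set" where
  "eps_aux G 0 = carrier G"
| "eps_aux G (Suc k) = V_rel G (comm_sub G (eps_aux G k) (carrier G))"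

definition eps :: "('g, 'b) monoid_scheme \<Rightarrow> nat \<Rightarrow> 'g set" where
  "eps G i = eps_aux G (i - 1)"

text \<open>Terminal term: first term equal to its successor (all later terms then coincide).\<close>
definition eps_inf :: "('g, 'b) monoid_scheme \<Rightarrow> 'g set" where
  "eps_inf G = eps_aux G (LEAST k. eps_aux G (Suc k) = eps_aux G k)"

end

theory Submission
  imports Defs "Jordan_Normal_Form.Jordan_Normal_Form_Existence"
begin


lemma trace_mult_comm:
  fixes A B :: "complex mat"
  assumes "A \<in> carrier_mat n m" "B \<in> carrier_mat m n"
  shows "mat_trace (A * B) = mat_trace (B * A)"
proof -
  have "mat_trace (A * B) = (\<Sum>i<n. \<Sum>k<m. A $$ (i,k) * B $$ (k,i))"
    using assms by (auto simp: mat_trace_def scalar_prod_def intro!: sum.cong)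
  also have "\<dots> = (\<Sum>k<m. \<Sum>i<n. B $$ (k,i) * A $$ (i,k))"
    by (subst sum.swap) (simp add: mult.commute)
  also have "\<dots> = mat_trace (B * A)"
    using assms by (auto simp: mat_trace_def scalar_prod_def intro!: sum.cong)
  finally show ?thesis .
qed

lemma trace_smult_one: "mat_trace (c \<cdot>\<^sub>m 1\<^sub>m n) = c * of_nat n"
  by (simp add: mat_trace_def)

lemma jb_pow_one:
  fixes a :: complex
  assumes "jordan_block k a ^\<^sub>m m = 1\<^sub>m k" "k > 0" "m > 0"
  shows "k = 1 \<and> a ^ m = 1"
proof -
  have e: "(jordan_block k a ^\<^sub>m m) $$ (i,j) = 1\<^sub>m k $$ (i,j)" for i j using assms(1) by simp
  have "a ^ m = 1" using e[of 0 0] assms(2) by (simp add: jordan_block_pow)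
  moreover have "k = 1"
  proof (rule ccontr)
    assume "k \<noteq> 1" then have "1 < k" using assms(2) by auto
    then have "of_nat m * a ^ (m - 1) = 0" using e[of 0 1] by (simp add: jordan_block_pow)
    then have "a = 0" using assms(3) by simp
    with \<open>a ^ m = 1\<close> assms(3) show False by (simp add: power_0_left)
  qed
  ultimately show ?thesis by simp
qed

lemma four_block_eq_one:
  fixes M1 M2 :: "complex mat"
  assumes "M1 \<in> carrier_mat k k" "M2 \<in> carrier_mat q q"
    "four_block_mat M1 (zero_mat k q) (zero_mat q k) M2 = 1\<^sub>m (k + q)"
  shows "M1 = 1\<^sub>m k" "M2 = 1\<^sub>m q"
proof -
  have e: "four_block_mat M1 (zero_mat k q) (zero_mat q k) M2 $$ (i,j) = 1\<^sub>m (k+q) $$ (i,j)" for i j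
    using assms(3) by simp
  show "M1 = 1\<^sub>m k"
  proof (rule eq_matI)
    fix i j assume "i < dim_row (1\<^sub>m k)" "j < dim_col (1\<^sub>m k)"
    then show "M1 $$ (i,j) = 1\<^sub>m k $$ (i,j)" using e[of i j] assms(1,2) by auto
  qed (use assms in auto)
  show "M2 = 1\<^sub>m q"
  proof (rule eq_matI)
    fix i j assume "i < dim_row (1\<^sub>m q)" "j < dim_col (1\<^sub>m q)"
    then show "M2 $$ (i,j) = 1\<^sub>m q $$ (i,j)" using e[of "i+k" "j+k"] assms(1,2) by auto
  qed (use assms in auto)
qed

lemma jordan_matrix_finite_order:
  fixes n_as :: "(nat \<times> complex) list"
  assumes "0 \<notin> fst ` set n_as" "m > 0"
    "jordan_matrix n_as ^\<^sub>m m = 1\<^sub>m (sum_list (map fst n_as))"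
  shows "\<exists>f. jordan_matrix n_as = mat_diag (sum_list (map fst n_as)) f
           \<and> (\<forall>i. f i ^ m = 1)"
  using assms
proof (induction n_as)
  case Nil
  show ?case by (rule exI[of _ "\<lambda>_. 1"]) (auto simp: jordan_matrix_def mat_diag_def)
next
  case (Cons ka n_as)
  obtain k a where ka: "ka = (k,a)" by force
  let ?N = "sum_list (map fst n_as)"
  have k0: "k > 0" using Cons.prems ka by auto
  have JC: "jordan_matrix (ka # n_as) = four_block_mat (jordan_block k a) (zero_mat k ?N) (zero_mat ?N k) (jordan_matrix n_as)"
    unfolding ka jordan_matrix_Cons ..
  have "jordan_matrix (ka # n_as) ^\<^sub>m m = diag_block_mat (map (\<lambda>(n,a). jordan_block n a ^\<^sub>m m) (ka # n_as))"
    by (rule jordan_matrix_pow)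
  also have "\<dots> = four_block_mat (jordan_block k a ^\<^sub>m m) (zero_mat k ?N) (zero_mat ?N k) (jordan_matrix n_as ^\<^sub>m m)"
    by (simp add: ka Let_def jordan_matrix_pow[symmetric])
  finally have "four_block_mat (jordan_block k a ^\<^sub>m m) (zero_mat k ?N) (zero_mat ?N k) (jordan_matrix n_as ^\<^sub>m m) = 1\<^sub>m (k + ?N)"
    using Cons.prems(3) ka by simp
  from four_block_eq_one[OF _ _ this]
  have 1: "jordan_block k a ^\<^sub>m m = 1\<^sub>m k" and 2: "jordan_matrix n_as ^\<^sub>m m = 1\<^sub>m ?N" by auto
  from jb_pow_one[OF 1 k0 Cons.prems(2)] have k1: "k = 1" and am: "a ^ m = 1" by auto
  from Cons.IH[OF _ Cons.prems(2) 2] Cons.prems(1) obtain f where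
    f: "jordan_matrix n_as = mat_diag ?N f" "\<forall>i. f i ^ m = 1" by auto
  let ?g = "\<lambda>i. if i = 0 then a else f (i - 1)"
  have "jordan_matrix (ka # n_as) = mat_diag (sum_list (map fst (ka # n_as))) ?g"
    unfolding JC f(1) using k1 ka
    by (intro eq_matI) (auto simp: mat_diag_def jordan_block_def)
  moreover have "\<forall>i. ?g i ^ m = 1" using am f(2) by auto
  ultimately show ?case by blast
qed

lemma unit_sum_eq:
  fixes z :: "nat \<Rightarrow> complex"
  assumes "\<And>i. i < n \<Longrightarrow> cmod (z i) = 1" "cmod (\<Sum>i<n. z i) = real n" "i < n" "j < n"
  shows "z i = z j"
proof -
  let ?S = "\<Sum>i<n. z i"
  have n0: "n > 0" using assms by auto
  define u where "u = ?S / of_nat n"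
  have u1: "cmod u = 1" using assms(2) n0 by (simp add: u_def norm_divide)
  have "(\<Sum>k<n. Re (cnj u * z k)) = Re (cnj u * ?S)"
    by (simp add: sum_distrib_left Re_sum)
  also have "cnj u * ?S = of_nat n * (cnj u * u)" using n0 by (simp add: u_def)
  also have "cnj u * u = 1" using u1
    by (metis complex_norm_square mult.commute of_real_1 power_one)
  finally have s: "(\<Sum>k<n. Re (cnj u * z k)) = real n" by simp
  have le: "Re (cnj u * z k) \<le> 1" if "k < n" for k
  proof -
    have "Re (cnj u * z k) \<le> cmod (cnj u * z k)" by (rule complex_Re_le_cmod)
    also have "\<dots> = 1" using u1 assms(1)[OF that] by (simp add: norm_mult)
    finally show ?thesis .
  qed
  have "(\<Sum>k<n. 1 - Re (cnj u * z k)) = 0" using s by (simp add: sum_subtractf)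
  then have z: "\<forall>k\<in>{..<n}. 1 - Re (cnj u * z k) = 0"
    by (subst sum_nonneg_eq_0_iff[symmetric]) (use le in auto)
  have w: "z k = u" if "k < n" for k
  proof -
    let ?w = "cnj u * z k"
    have r: "Re ?w = 1" using z that by auto
    have m: "cmod ?w = 1" using u1 assms(1)[OF that] by (simp add: norm_mult)
    have "(Re ?w)^2 + (Im ?w)^2 = 1" using m by (metis cmod_power2 one_power2)
    then have "Im ?w = 0" using r by simp
    then have "?w = 1" using r by (simp add: complex_eq_iff)
    then have "u * ?w = u" by simp
    moreover have "u * ?w = (u * cnj u) * z k" by (simp add: mult.assoc)
    moreover have "u * cnj u = 1" using \<open>cnj u * u = 1\<close> by (simp add: mult.commute)
    ultimately show ?thesis by simp
  qed
  show ?thesis using w assms(3,4) by simp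
qed


lemma finite_order_scalar:
  fixes A :: "complex mat"
  assumes A: "A \<in> carrier_mat n n" and m: "m > 0" and Am: "A ^\<^sub>m m = 1\<^sub>m n"
    and tr: "cmod (mat_trace A) = real n"
  shows "\<exists>c. A = c \<cdot>\<^sub>m 1\<^sub>m n \<and> c ^ m = 1"
proof -
  obtain as where "char_poly A = (\<Prod>a\<leftarrow>as. [:- a, 1:])"
    using char_poly_factorized[OF A] by auto
  from jordan_nf_exists[OF A this] obtain n_as where jnf: "jordan_nf A n_as" by auto
  let ?J = "jordan_matrix n_as"
  let ?N = "sum_list (map fst n_as)"
  from jnf obtain P Q where w: "similar_mat_wit A ?J P Q" and z: "0 \<notin> fst ` set n_as"
    unfolding jordan_nf_def similar_mat_def by auto
  from w A have J: "?J \<in> carrier_mat n n" and P: "P \<in> carrier_mat n n" and Q: "Q \<in> carrier_mat n n"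
    and PQ: "P * Q = 1\<^sub>m n" and QP: "Q * P = 1\<^sub>m n" and AJ: "A = P * ?J * Q"
    unfolding similar_mat_wit_def Let_def by auto
  have Nn: "?N = n" using J jordan_matrix_dim(1)[of n_as] by (metis carrier_matD(1))
  have "?J ^\<^sub>m m = Q * A ^\<^sub>m m * P"
    by (rule similar_mat_wit_pow_id[OF similar_mat_wit_sym[OF w]])
  also have "\<dots> = 1\<^sub>m n" using Am Q P QP by simp
  finally have "?J ^\<^sub>m m = 1\<^sub>m ?N" using Nn by simp
  from jordan_matrix_finite_order[OF z m this] obtain f where
    f: "?J = mat_diag n f" "\<And>i. f i ^ m = 1" using Nn by auto
  have fn: "cmod (f i) = 1" for i
  proof -
    have "cmod (f i) ^ m = 1" using f(2)[of i] by (metis norm_power norm_one)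
    then show ?thesis using m by (metis norm_ge_zero power_eq_imp_eq_base power_one zero_le_one)
  qed
  have "mat_trace A = mat_trace ((P * ?J) * Q)" using AJ by simp
  also have "\<dots> = mat_trace (Q * (P * ?J))"
    by (rule trace_mult_comm[of _ n n]) (use P J Q in auto)
  also have "Q * (P * ?J) = (Q * P) * ?J" using P J Q by (simp add: assoc_mult_mat)
  also have "\<dots> = ?J" using QP J by (simp add: left_mult_one_mat)
  finally have "mat_trace A = (\<Sum>i<n. f i)" using f(1) by (simp add: mat_trace_def mat_diag_def)
  with tr have s: "cmod (\<Sum>i<n. f i) = real n" by simp
  have "?J = f 0 \<cdot>\<^sub>m 1\<^sub>m n"
    unfolding f(1) by (rule eq_matI) (auto simp: mat_diag_def intro: unit_sum_eq[OF _ s] fn)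
  then have "A = P * (f 0 \<cdot>\<^sub>m 1\<^sub>m n) * Q" using AJ by simp
  also have "P * (f 0 \<cdot>\<^sub>m 1\<^sub>m n) = f 0 \<cdot>\<^sub>m P"
    using mult_smult_distrib[OF P one_carrier_mat[of n]] P by simp
  also have "(f 0 \<cdot>\<^sub>m P) * Q = f 0 \<cdot>\<^sub>m (P * Q)" by (rule mult_smult_assoc_mat[OF P Q])
  finally show ?thesis using PQ f(2) by auto
qed

lemma eigen_exists:
  fixes A :: "complex mat"
  assumes A: "A \<in> carrier_mat n n" and n: "n > 0"
  shows "\<exists>v c. v \<in> carrier_vec n \<and> v \<noteq> 0\<^sub>v n \<and> A *\<^sub>v v = c \<cdot>\<^sub>v v"
proof -
  obtain as where cp: "char_poly A = (\<Prod>a\<leftarrow>as. [:- a, 1:])" and l: "length as = n"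
    using char_poly_factorized[OF A] by auto
  then obtain a where a: "a \<in> set as" using n by (cases as) auto
  have "poly (char_poly A) a = 0" unfolding cp using a
    by (induction as) (auto simp: poly_prod_list)
  then have "eigenvalue A a" using eigenvalue_root_char_poly[OF A] by simp
  then show ?thesis using A unfolding eigenvalue_def eigenvector_def by auto
qed



lemma scalar_of_eigen_all:
  fixes A :: "complex mat"
  assumes A: "A \<in> carrier_mat n n" and h: "\<And>v. v \<in> carrier_vec n \<Longrightarrow> A *\<^sub>v v = c \<cdot>\<^sub>v v"
  shows "A = c \<cdot>\<^sub>m 1\<^sub>m n"
proof (rule eq_matI)
  fix i j assume ij: "i < dim_row (c \<cdot>\<^sub>m 1\<^sub>m n)" "j < dim_col (c \<cdot>\<^sub>m 1\<^sub>m n)"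
  then have i: "i < n" and j: "j < n" by auto
  have "A $$ (i,j) = (A *\<^sub>v unit_vec n j) $ i" using A i j by (simp add: row_def)
  also have "\<dots> = (c \<cdot>\<^sub>v unit_vec n j) $ i" using h[of "unit_vec n j"] by simp
  also have "\<dots> = (c \<cdot>\<^sub>m 1\<^sub>m n) $$ (i,j)" using i j by simp
  finally show "A $$ (i,j) = (c \<cdot>\<^sub>m 1\<^sub>m n) $$ (i,j)" .
qed (use A in auto)

lemma schur_lemma:
  fixes A :: "complex mat"
  assumes irr: "is_irrep G n \<rho>" and A: "A \<in> carrier_mat n n"
    and comm: "\<And>h. h \<in> carrier G \<Longrightarrow> A * \<rho> h = \<rho> h * A"
  shows "\<exists>c. A = c \<cdot>\<^sub>m 1\<^sub>m n"
proof -
  have n: "n > 0" and rc: "\<And>h. h \<in> carrier G \<Longrightarrow> \<rho> h \<in> carrier_mat n n"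
    using irr unfolding is_irrep_def is_rep_def by auto
  obtain v c where v: "v \<in> carrier_vec n" "v \<noteq> 0\<^sub>v n" "A *\<^sub>v v = c \<cdot>\<^sub>v v"
    using eigen_exists[OF A n] by auto
  define W where "W = {w \<in> carrier_vec n. A *\<^sub>v w = c \<cdot>\<^sub>v w}"
  have sub: "is_subspace n W"
    unfolding is_subspace_def W_def
  proof (intro conjI ballI allI)
    show "{w \<in> carrier_vec n. A *\<^sub>v w = c \<cdot>\<^sub>v w} \<subseteq> carrier_vec n" by auto
    show "0\<^sub>v n \<in> {w \<in> carrier_vec n. A *\<^sub>v w = c \<cdot>\<^sub>v w}" using A by auto
  next
    fix x y assume x: "x \<in> {w \<in> carrier_vec n. A *\<^sub>v w = c \<cdot>\<^sub>v w}" and y: "y \<in> {w \<in> carrier_vec n. A *\<^sub>v w = c \<cdot>\<^sub>v w}"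
    then have "A *\<^sub>v (x + y) = A *\<^sub>v x + A *\<^sub>v y" using A by (simp add: mult_add_distrib_mat_vec)
    also have "\<dots> = c \<cdot>\<^sub>v (x + y)" using x y by (simp add: smult_add_distrib_vec[of x n y])
    finally show "x + y \<in> {w \<in> carrier_vec n. A *\<^sub>v w = c \<cdot>\<^sub>v w}" using x y by auto
  next
    fix k x assume x: "x \<in> {w \<in> carrier_vec n. A *\<^sub>v w = c \<cdot>\<^sub>v w}"
    then have "A *\<^sub>v (k \<cdot>\<^sub>v x) = k \<cdot>\<^sub>v (A *\<^sub>v x)" using A by (simp add: mult_mat_vec)
    also have "\<dots> = c \<cdot>\<^sub>v (k \<cdot>\<^sub>v x)" using x by (simp add: smult_smult_assoc mult.commute)
    finally show "k \<cdot>\<^sub>v x \<in> {w \<in> carrier_vec n. A *\<^sub>v w = c \<cdot>\<^sub>v w}" using x by auto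
  qed
  have inv: "\<forall>g \<in> carrier G. \<forall>w \<in> W. \<rho> g *\<^sub>v w \<in> W"
  proof (intro ballI)
    fix g w assume g: "g \<in> carrier G" and w: "w \<in> W"
    have "A *\<^sub>v (\<rho> g *\<^sub>v w) = (A * \<rho> g) *\<^sub>v w" using A rc[OF g] w by (simp add: W_def)
    also have "\<dots> = (\<rho> g * A) *\<^sub>v w" using comm[OF g] by simp
    also have "\<dots> = \<rho> g *\<^sub>v (c \<cdot>\<^sub>v w)" using A rc[OF g] w by (simp add: W_def)
    also have "\<dots> = c \<cdot>\<^sub>v (\<rho> g *\<^sub>v w)" using rc[OF g] w by (simp add: W_def mult_mat_vec)
    finally show "\<rho> g *\<^sub>v w \<in> W" using rc[OF g] w by (simp add: W_def)
  qed
  have "W = {0\<^sub>v n} \<or> W = carrier_vec n" using irr sub inv unfolding is_irrep_def by blast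
  moreover have "v \<in> W" using v by (simp add: W_def)
  ultimately have "W = carrier_vec n" using v(2) by auto
  then have "A = c \<cdot>\<^sub>m 1\<^sub>m n" by (intro scalar_of_eigen_all[OF A]) (auto simp: W_def)
  then show ?thesis by blast
qed

context group begin

lemma rep_carrier: "is_rep G n \<rho> \<Longrightarrow> g \<in> carrier G \<Longrightarrow> \<rho> g \<in> carrier_mat n n"
  unfolding is_rep_def by auto

lemma rep_mult: "is_rep G n \<rho> \<Longrightarrow> x \<in> carrier G \<Longrightarrow> y \<in> carrier G \<Longrightarrow> \<rho> (x \<otimes> y) = \<rho> x * \<rho> y"
  unfolding is_rep_def by auto

lemma rep_one: "is_rep G n \<rho> \<Longrightarrow> \<rho> \<one> = 1\<^sub>m n"
  unfolding is_rep_def by auto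

lemma rep_pos: "is_rep G n \<rho> \<Longrightarrow> n > 0"
  unfolding is_rep_def by auto

lemma rep_pow: assumes "is_rep G n \<rho>" "g \<in> carrier G"
  shows "\<rho> (g [^] (k::nat)) = \<rho> g ^\<^sub>m k"
proof (induction k)
  case 0 then show ?case using assms rep_one rep_carrier by (simp, metis carrier_matD(1))
next
  case (Suc k)
  have "\<rho> (g [^] Suc k) = \<rho> (g [^] k \<otimes> g)" by simp
  also have "\<dots> = \<rho> (g [^] k) * \<rho> g" using assms by (simp add: rep_mult)
  finally show ?case using Suc by simp
qed

lemma rep_finite_order: assumes "is_rep G n \<rho>" "g \<in> carrier G" "finite (carrier G)"
  shows "\<rho> g ^\<^sub>m Coset.order G = 1\<^sub>m n"
  using rep_pow[OF assms(1,2), of "Coset.order G"] pow_order_eq_1[OF assms(2)] rep_one[OF assms(1)] by simp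

lemma rep_inv: assumes "is_rep G n \<rho>" "g \<in> carrier G"
  shows "\<rho> (inv g) * \<rho> g = 1\<^sub>m n"
  using rep_mult[OF assms(1), of "inv g" g] assms rep_one[OF assms(1)] by simp

lemma comm_decomp: "a \<in> carrier G \<Longrightarrow> b \<in> carrier G \<Longrightarrow>
   a \<otimes> b = (b \<otimes> a) \<otimes> (inv a \<otimes> inv b \<otimes> a \<otimes> b)"
proof -
  assume a: "a \<in> carrier G" and b: "b \<in> carrier G"
  have h1: "(b \<otimes> a) \<otimes> inv a = b" using a b by (simp add: m_assoc)
  have h2: "b \<otimes> inv b = \<one>" using b by simp
  have "(b \<otimes> a) \<otimes> (inv a \<otimes> inv b \<otimes> a \<otimes> b) = ((((b \<otimes> a) \<otimes> inv a) \<otimes> inv b) \<otimes> a) \<otimes> b"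
    by (simp only: m_assoc a b inv_closed m_closed)
  also have "\<dots> = a \<otimes> b" unfolding h1 h2 using a b by simp
  finally show ?thesis by simp
qed

lemma rep_comm_of_trivial: assumes "is_rep G n \<rho>" "a \<in> carrier G" "b \<in> carrier G"
  "\<rho> (inv a \<otimes> inv b \<otimes> a \<otimes> b) = 1\<^sub>m n"
  shows "\<rho> a * \<rho> b = \<rho> b * \<rho> a"
proof -
  have "\<rho> a * \<rho> b = \<rho> (a \<otimes> b)" using assms by (simp add: rep_mult)
  also have "\<dots> = \<rho> (b \<otimes> a) * \<rho> (inv a \<otimes> inv b \<otimes> a \<otimes> b)"
    using assms comm_decomp[of a b] by (simp add: rep_mult)
  also have "\<dots> = \<rho> (b \<otimes> a)" using assms rep_carrier[OF assms(1), of "b \<otimes> a"] by simp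
  finally show ?thesis using assms by (simp add: rep_mult)
qed

lemma rep_trivial_of_scalar: assumes "is_rep G n \<rho>" "a \<in> carrier G" "b \<in> carrier G"
  "\<rho> a = c \<cdot>\<^sub>m 1\<^sub>m n"
  shows "\<rho> (inv a \<otimes> inv b \<otimes> a \<otimes> b) = 1\<^sub>m n"
proof -
  let ?x = "b \<otimes> a" and ?y = "inv a \<otimes> inv b \<otimes> a \<otimes> b"
  have x: "?x \<in> carrier G" and y: "?y \<in> carrier G" using assms by auto
  have Rb: "\<rho> b \<in> carrier_mat n n" using assms rep_carrier by auto
  have "\<rho> ?x * \<rho> ?y = \<rho> (a \<otimes> b)" using assms comm_decomp[of a b] x y by (simp add: rep_mult)
  also have "\<dots> = \<rho> a * \<rho> b" using assms by (simp add: rep_mult)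
  also have "\<dots> = c \<cdot>\<^sub>m \<rho> b"
    using assms(4) mult_smult_assoc_mat[OF one_carrier_mat Rb, of c] Rb by simp
  also have "\<dots> = \<rho> b * \<rho> a"
    using assms(4) mult_smult_distrib[OF Rb one_carrier_mat, of c] Rb by simp
  also have "\<dots> = \<rho> ?x" using assms by (simp add: rep_mult)
  finally have e: "\<rho> ?x * \<rho> ?y = \<rho> ?x" .
  have "\<rho> ?y = (\<rho> (inv ?x) * \<rho> ?x) * \<rho> ?y"
    using rep_inv[OF assms(1) x] rep_carrier[OF assms(1) y] by simp
  also have "\<dots> = \<rho> (inv ?x) * (\<rho> ?x * \<rho> ?y)"
    using rep_carrier[OF assms(1)] x y by (simp add: assoc_mult_mat[of _ n n _ n _ n])
  also have "\<dots> = 1\<^sub>m n" using e rep_inv[OF assms(1) x] by simp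
  finally show ?thesis .
qed

end


lemma smult_one_one[simp]: "(1::complex) \<cdot>\<^sub>m 1\<^sub>m n = 1\<^sub>m n"
  by (rule eq_matI) auto

lemma pow_smult_one: "(c \<cdot>\<^sub>m 1\<^sub>m n) ^\<^sub>m k = (c ^ k :: complex) \<cdot>\<^sub>m 1\<^sub>m n"
proof (induction k)
  case 0 then show ?case by simp
next
  case (Suc k)
  have "(c \<cdot>\<^sub>m 1\<^sub>m n) ^\<^sub>m Suc k = (c ^ k \<cdot>\<^sub>m 1\<^sub>m n) * (c \<cdot>\<^sub>m 1\<^sub>m n)" using Suc by simp
  also have "\<dots> = (c ^ Suc k) \<cdot>\<^sub>m 1\<^sub>m n" by (rule eq_matI) auto
  finally show ?case .
qed

definition chi :: "('g, 'b) monoid_scheme \<Rightarrow> ('g \<Rightarrow> complex mat) \<Rightarrow> 'g \<Rightarrow> complex" where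
  "chi G \<rho> = (\<lambda>g. if g \<in> carrier G then mat_trace (\<rho> g) else 0)"

lemma IrrE: assumes "\<chi> \<in> Irr G" obtains n \<rho> where "is_irrep G n \<rho>" "\<chi> = chi G \<rho>"
  using assms unfolding Irr_def chi_def by auto

lemma IrrI: "is_irrep G n \<rho> \<Longrightarrow> chi G \<rho> \<in> Irr G"
  unfolding Irr_def chi_def by auto

context group begin

lemma chi_one: "is_rep G n \<rho> \<Longrightarrow> chi G \<rho> \<one> = of_nat n"
  unfolding chi_def using rep_one[of n \<rho>] by (simp add: mat_trace_def)

context
  assumes fin: "finite (carrier G)"
begin

lemma order_pos: "Coset.order G > 0"
  using fin order_gt_0_iff_finite by blast

lemma scalar_root: assumes "is_rep G n \<rho>" "g \<in> carrier G" "\<rho> g = c \<cdot>\<^sub>m 1\<^sub>m n"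
  shows "c ^ Coset.order G = 1"
proof -
  have "(c ^ Coset.order G) \<cdot>\<^sub>m 1\<^sub>m n = 1\<^sub>m n"
    using rep_finite_order[OF assms(1,2) fin] assms(3) pow_smult_one by metis
  then have "((c ^ Coset.order G) \<cdot>\<^sub>m 1\<^sub>m n) $$ (0,0) = 1\<^sub>m n $$ (0,0)" by simp
  then show ?thesis using rep_pos[OF assms(1)] by simp
qed

lemma center_iff: assumes "is_rep G n \<rho>"
  shows "g \<in> char_center G (chi G \<rho>) \<longleftrightarrow> g \<in> carrier G \<and> (\<exists>c. \<rho> g = c \<cdot>\<^sub>m 1\<^sub>m n)"
proof
  assume g: "g \<in> char_center G (chi G \<rho>)"
  then have gc: "g \<in> carrier G" by (simp add: char_center_def)
  have "cmod (mat_trace (\<rho> g)) = real n"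
    using g gc chi_one[OF assms] by (simp add: char_center_def chi_def)
  from finite_order_scalar[OF rep_carrier[OF assms gc] order_pos rep_finite_order[OF assms gc fin] this]
  show "g \<in> carrier G \<and> (\<exists>c. \<rho> g = c \<cdot>\<^sub>m 1\<^sub>m n)" using gc by auto
next
  assume "g \<in> carrier G \<and> (\<exists>c. \<rho> g = c \<cdot>\<^sub>m 1\<^sub>m n)"
  then obtain c where gc: "g \<in> carrier G" and c: "\<rho> g = c \<cdot>\<^sub>m 1\<^sub>m n" by auto
  have "c ^ Coset.order G = 1" by (rule scalar_root[OF assms gc c])
  then have "cmod c ^ Coset.order G = 1" by (metis norm_power norm_one)
  then have "cmod c = 1" using order_pos by (metis norm_ge_zero power_eq_imp_eq_base power_one zero_le_one)
  then have "cmod (mat_trace (\<rho> g)) = real n" using c by (simp add: trace_smult_one norm_mult)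
  then show "g \<in> char_center G (chi G \<rho>)"
    using gc chi_one[OF assms] by (simp add: char_center_def chi_def)
qed

lemma kernel_iff: assumes "is_rep G n \<rho>"
  shows "g \<in> char_kernel G (chi G \<rho>) \<longleftrightarrow> g \<in> carrier G \<and> \<rho> g = 1\<^sub>m n"
proof
  assume g: "g \<in> char_kernel G (chi G \<rho>)"
  then have gc: "g \<in> carrier G" by (simp add: char_kernel_def)
  have t: "mat_trace (\<rho> g) = of_nat n"
    using g gc chi_one[OF assms] by (simp add: char_kernel_def chi_def)
  then have "g \<in> char_center G (chi G \<rho>)"
    using gc chi_one[OF assms] by (simp add: char_center_def chi_def)
  then obtain c where c: "\<rho> g = c \<cdot>\<^sub>m 1\<^sub>m n" using center_iff[OF assms] by auto
  then have "c * of_nat n = of_nat n" using t by (simp add: trace_smult_one)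
  then have "c = 1" using rep_pos[OF assms] by simp
  then show "g \<in> carrier G \<and> \<rho> g = 1\<^sub>m n" using c gc by simp
next
  assume "g \<in> carrier G \<and> \<rho> g = 1\<^sub>m n"
  then show "g \<in> char_kernel G (chi G \<rho>)"
    using chi_one[OF assms] by (simp add: char_kernel_def chi_def mat_trace_def)
qed

end

lemma kernel_subgroup: assumes "is_rep G n \<rho>"
  shows "subgroup {g \<in> carrier G. \<rho> g = 1\<^sub>m n} G"
proof (rule subgroupI)
  show "{g \<in> carrier G. \<rho> g = 1\<^sub>m n} \<subseteq> carrier G" by auto
  show "{g \<in> carrier G. \<rho> g = 1\<^sub>m n} \<noteq> {}" using rep_one[OF assms] by auto
next
  fix a assume a: "a \<in> {g \<in> carrier G. \<rho> g = 1\<^sub>m n}"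
  then have "\<rho> (inv a) = \<rho> (inv a) * \<rho> a" using rep_carrier[OF assms, of "inv a"] right_mult_one_mat by simp
  also have "\<dots> = 1\<^sub>m n" using rep_inv[OF assms, of a] a by simp
  finally show "inv a \<in> {g \<in> carrier G. \<rho> g = 1\<^sub>m n}" using a by simp
next
  fix a b assume "a \<in> {g \<in> carrier G. \<rho> g = 1\<^sub>m n}" "b \<in> {g \<in> carrier G. \<rho> g = 1\<^sub>m n}"
  then show "a \<otimes> b \<in> {g \<in> carrier G. \<rho> g = 1\<^sub>m n}" using rep_mult[OF assms] by simp
qed

lemma scalar_subgroup: assumes "is_rep G n \<rho>"
  shows "subgroup {g \<in> carrier G. \<exists>c. \<rho> g = c \<cdot>\<^sub>m 1\<^sub>m n} G"
proof (rule subgroupI)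
  show "{g \<in> carrier G. \<exists>c. \<rho> g = c \<cdot>\<^sub>m 1\<^sub>m n} \<subseteq> carrier G" by auto
  show "{g \<in> carrier G. \<exists>c. \<rho> g = c \<cdot>\<^sub>m 1\<^sub>m n} \<noteq> {}"
  proof -
    have "\<one> \<in> {g \<in> carrier G. \<exists>c. \<rho> g = c \<cdot>\<^sub>m 1\<^sub>m n}" using rep_one[OF assms]
      by (auto intro!: exI[of _ 1])
    then show ?thesis by blast
  qed
next
  fix a assume a: "a \<in> {g \<in> carrier G. \<exists>c. \<rho> g = c \<cdot>\<^sub>m 1\<^sub>m n}"
  then obtain c where ac: "a \<in> carrier G" and c: "\<rho> a = c \<cdot>\<^sub>m 1\<^sub>m n" by auto
  have R: "\<rho> (inv a) \<in> carrier_mat n n" using rep_carrier[OF assms] ac by simp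
  have e: "\<rho> (inv a) * \<rho> a = 1\<^sub>m n" using rep_inv[OF assms ac] .
  have "\<rho> (inv a) * \<rho> a = c \<cdot>\<^sub>m \<rho> (inv a)"
    using c mult_smult_distrib[OF R one_carrier_mat, of c] R by simp
  then have e2: "c \<cdot>\<^sub>m \<rho> (inv a) = 1\<^sub>m n" using e by simp
  have "c \<noteq> 0"
  proof
    assume "c = 0"
    then have "(c \<cdot>\<^sub>m \<rho> (inv a)) $$ (0,0) = 0" using R rep_pos[OF assms] by simp
    with e2 rep_pos[OF assms] show False by simp
  qed
  have "\<rho> (inv a) = inverse c \<cdot>\<^sub>m (c \<cdot>\<^sub>m \<rho> (inv a))"
    using R \<open>c \<noteq> 0\<close> by (intro eq_matI) auto
  also have "\<dots> = inverse c \<cdot>\<^sub>m 1\<^sub>m n" using e2 by simp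
  finally show "inv a \<in> {g \<in> carrier G. \<exists>c. \<rho> g = c \<cdot>\<^sub>m 1\<^sub>m n}" using ac by auto
next
  fix a b assume "a \<in> {g \<in> carrier G. \<exists>c. \<rho> g = c \<cdot>\<^sub>m 1\<^sub>m n}" "b \<in> {g \<in> carrier G. \<exists>c. \<rho> g = c \<cdot>\<^sub>m 1\<^sub>m n}"
  then obtain c d where ab: "a \<in> carrier G" "b \<in> carrier G" and c: "\<rho> a = c \<cdot>\<^sub>m 1\<^sub>m n"
    and d: "\<rho> b = d \<cdot>\<^sub>m 1\<^sub>m n" by auto
  have "\<rho> (a \<otimes> b) = (c * d) \<cdot>\<^sub>m 1\<^sub>m n" using rep_mult[OF assms ab] c d by (intro eq_matI) auto
  then show "a \<otimes> b \<in> {g \<in> carrier G. \<exists>c. \<rho> g = c \<cdot>\<^sub>m 1\<^sub>m n}" using ab by auto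
qed

end


context group begin

lemma cancel1: "x \<in> carrier G \<Longrightarrow> z \<in> carrier G \<Longrightarrow> x \<otimes> (inv x \<otimes> z) = z"
  by (simp add: m_assoc[symmetric])
lemma cancel2: "x \<in> carrier G \<Longrightarrow> z \<in> carrier G \<Longrightarrow> inv x \<otimes> (x \<otimes> z) = z"
  by (simp add: m_assoc[symmetric])

lemma comm_conj: assumes "a \<in> carrier G" "b \<in> carrier G" "x \<in> carrier G"
  shows "x \<otimes> (inv a \<otimes> inv b \<otimes> a \<otimes> b) \<otimes> inv x =
    inv (inv a \<otimes> inv (inv x) \<otimes> a \<otimes> inv x) \<otimes> (inv a \<otimes> inv (b \<otimes> inv x) \<otimes> a \<otimes> (b \<otimes> inv x))"
  using assms by (simp add: m_assoc inv_mult_group cancel1 cancel2)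

definition comms :: "'a set \<Rightarrow> 'a set" where
  "comms H = (\<Union>a \<in> H. \<Union>b \<in> carrier G. {inv a \<otimes> inv b \<otimes> a \<otimes> b})"

lemma comm_sub_eq: "comm_sub G H (carrier G) = generate G (comms H)"
  unfolding comm_sub_def comms_def ..

lemma comms_carrier: "H \<subseteq> carrier G \<Longrightarrow> comms H \<subseteq> carrier G"
  unfolding comms_def by auto

lemma comm_sub_subgroup: "H \<subseteq> carrier G \<Longrightarrow> subgroup (comm_sub G H (carrier G)) G"
  unfolding comm_sub_eq by (rule generate_is_subgroup[OF comms_carrier])

lemma comm_sub_normal: assumes H: "H \<subseteq> carrier G"
  shows "comm_sub G H (carrier G) \<lhd> G"
proof -
  let ?K = "generate G (comms H)"
  have sg: "subgroup ?K G" by (rule generate_is_subgroup[OF comms_carrier[OF H]])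
  have "x \<otimes> h \<otimes> inv x \<in> ?K" if x: "x \<in> carrier G" and h: "h \<in> ?K" for x h
    using h
  proof (induction rule: generate.induct)
    case one then show ?case using x sg by (simp add: subgroup.one_closed)
  next
    case (incl c)
    then obtain a b where ab: "a \<in> H" "b \<in> carrier G" and c: "c = inv a \<otimes> inv b \<otimes> a \<otimes> b"
      unfolding comms_def by auto
    have a: "a \<in> carrier G" using ab H by auto
    have 1: "inv a \<otimes> inv (inv x) \<otimes> a \<otimes> inv x \<in> ?K"
      proof (rule generate.incl)
      show "inv a \<otimes> inv (inv x) \<otimes> a \<otimes> inv x \<in> comms H"
        unfolding comms_def using ab inv_closed[OF x] by blast
    qed
    have 2: "inv a \<otimes> inv (b \<otimes> inv x) \<otimes> a \<otimes> (b \<otimes> inv x) \<in> ?K"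
      proof (rule generate.incl)
      show "inv a \<otimes> inv (b \<otimes> inv x) \<otimes> a \<otimes> (b \<otimes> inv x) \<in> comms H"
        unfolding comms_def using ab m_closed[OF ab(2) inv_closed[OF x]] by blast
    qed
    show ?case unfolding c comm_conj[OF a ab(2) x]
      by (rule subgroup.m_closed[OF sg subgroup.m_inv_closed[OF sg 1] 2])
  next
    case (inv c)
    then obtain a b where ab: "a \<in> H" "b \<in> carrier G" and c: "c = inv a \<otimes> inv b \<otimes> a \<otimes> b"
      unfolding comms_def by auto
    have a: "a \<in> carrier G" using ab H by auto
    have cK: "x \<otimes> c \<otimes> inv x \<in> ?K"
    proof -
      have 1: "inv a \<otimes> inv (inv x) \<otimes> a \<otimes> inv x \<in> ?K"
        proof (rule generate.incl)
      show "inv a \<otimes> inv (inv x) \<otimes> a \<otimes> inv x \<in> comms H"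
        unfolding comms_def using ab inv_closed[OF x] by blast
    qed
      have 2: "inv a \<otimes> inv (b \<otimes> inv x) \<otimes> a \<otimes> (b \<otimes> inv x) \<in> ?K"
        proof (rule generate.incl)
      show "inv a \<otimes> inv (b \<otimes> inv x) \<otimes> a \<otimes> (b \<otimes> inv x) \<in> comms H"
        unfolding comms_def using ab m_closed[OF ab(2) inv_closed[OF x]] by blast
    qed
      show ?thesis unfolding c comm_conj[OF a ab(2) x]
        by (rule subgroup.m_closed[OF sg subgroup.m_inv_closed[OF sg 1] 2])
    qed
    have cc: "c \<in> carrier G" using c a ab by auto
    have "x \<otimes> inv c \<otimes> inv x = inv (x \<otimes> c \<otimes> inv x)"
      using x cc by (simp add: inv_mult_group m_assoc)
    then show ?case using subgroup.m_inv_closed[OF sg cK] by simp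
  next
    case (eng h1 h2)
    have h1: "h1 \<in> carrier G" and h2: "h2 \<in> carrier G"
      using eng.hyps generate_in_carrier[OF comms_carrier[OF H]] by auto
    have "x \<otimes> (h1 \<otimes> h2) \<otimes> inv x = (x \<otimes> h1 \<otimes> inv x) \<otimes> (x \<otimes> h2 \<otimes> inv x)"
      using x h1 h2 by (simp add: m_assoc cancel2)
    then show ?case using subgroup.m_closed[OF sg eng.IH] by simp
  qed
  then show ?thesis unfolding comm_sub_eq using normal_inv_iff sg by blast
qed

lemma eps_aux_carrier: "eps_aux G k \<subseteq> carrier G"
proof (induction k)
  case 0 then show ?case by simp
next
  case (Suc k) then show ?case by (simp add: V_rel_def generate_incl)
qed

lemma V_rel_mono: "N \<subseteq> N' \<Longrightarrow> V_rel G N \<subseteq> V_rel G N'"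
  unfolding V_rel_def Irr_rel_def by (rule mono_generate) blast

lemma comm_sub_mono: "H \<subseteq> H' \<Longrightarrow> comm_sub G H C \<subseteq> comm_sub G H' C"
  unfolding comm_sub_def by (rule mono_generate) blast

lemma eps_dec: "eps_aux G (Suc k) \<subseteq> eps_aux G k"
proof (induction k)
  case 0 then show ?case by (simp add: V_rel_def generate_incl)
next
  case (Suc k)
  then show ?case by (simp only: eps_aux.simps) (intro V_rel_mono comm_sub_mono, simp)
qed

lemma eps_anti: "j \<le> k \<Longrightarrow> eps_aux G k \<subseteq> eps_aux G j"
proof (induction k)
  case 0 then show ?case by simp
next
  case (Suc k)
  show ?case
  proof (cases "j = Suc k")
    case False
    then have "j \<le> k" using Suc by simp
    then show ?thesis using Suc.IH eps_dec[of k] by blast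
  qed simp
qed

lemma eps_comparable: "eps_aux G j \<subseteq> eps_aux G k \<or> eps_aux G k \<subseteq> eps_aux G j"
  using eps_anti nat_le_linear by blast

context
  assumes fin: "finite (carrier G)"
begin

lemma key_center: assumes irr: "is_irrep G n \<rho>" and H: "H \<subseteq> carrier G"
  and ker: "comm_sub G H (carrier G) \<subseteq> char_kernel G (chi G \<rho>)"
  shows "H \<subseteq> char_center G (chi G \<rho>)"
proof
  fix h assume h: "h \<in> H"
  have rep: "is_rep G n \<rho>" using irr unfolding is_irrep_def by auto
  have hc: "h \<in> carrier G" using h H by auto
  have "\<rho> h * \<rho> b = \<rho> b * \<rho> h" if b: "b \<in> carrier G" for b
  proof -
    have "inv h \<otimes> inv b \<otimes> h \<otimes> b \<in> comm_sub G H (carrier G)"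
      unfolding comm_sub_def by (rule generate.incl) (use h b in auto)
    then have "\<rho> (inv h \<otimes> inv b \<otimes> h \<otimes> b) = 1\<^sub>m n"
      using ker kernel_iff[OF fin rep] by blast
    then show ?thesis by (rule rep_comm_of_trivial[OF rep hc b])
  qed
  then obtain c where "\<rho> h = c \<cdot>\<^sub>m 1\<^sub>m n"
    using schur_lemma[OF irr rep_carrier[OF rep hc]] by blast
  then show "h \<in> char_center G (chi G \<rho>)" using center_iff[OF fin rep] hc by blast
qed

lemma core: assumes irr: "is_irrep G n \<rho>"
  shows "comm_sub G (eps_aux G i) (carrier G) \<subseteq> char_kernel G (chi G \<rho>) \<Longrightarrow>
    \<exists>j\<le>i. char_center G (chi G \<rho>) = eps_aux G j \<and>
      (\<forall>g\<in>carrier G - char_center G (chi G \<rho>). chi G \<rho> g = 0)"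
proof (induction i)
  case 0
  have "carrier G \<subseteq> char_center G (chi G \<rho>)"
    using key_center[OF irr _ 0[simplified]] by simp
  moreover have "char_center G (chi G \<rho>) \<subseteq> carrier G" by (auto simp: char_center_def)
  ultimately show ?case by auto
next
  case (Suc i)
  have rep: "is_rep G n \<rho>" using irr unfolding is_irrep_def by auto
  show ?case
  proof (cases "comm_sub G (eps_aux G i) (carrier G) \<subseteq> char_kernel G (chi G \<rho>)")
    case True
    then show ?thesis using Suc.IH le_SucI by blast
  next
    case False
    then have rel: "chi G \<rho> \<in> Irr_rel G (comm_sub G (eps_aux G i) (carrier G))"
      unfolding Irr_rel_def using IrrI[OF irr] by auto
    have E: "eps_aux G (Suc i) = generate G {g \<in> carrier G. \<exists>\<chi> \<in> Irr_rel G (comm_sub G (eps_aux G i) (carrier G)). \<chi> g \<noteq> 0}"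
      by (simp add: V_rel_def)
    have nz: "g \<in> eps_aux G (Suc i)" if "g \<in> carrier G" "chi G \<rho> g \<noteq> 0" for g
      unfolding E by (rule generate.incl) (use that rel in auto)
    have sub1: "eps_aux G (Suc i) \<subseteq> char_center G (chi G \<rho>)"
      by (rule key_center[OF irr eps_aux_carrier Suc.prems])
    have sub2: "char_center G (chi G \<rho>) \<subseteq> eps_aux G (Suc i)"
    proof
      fix g assume g: "g \<in> char_center G (chi G \<rho>)"
      then have gc: "g \<in> carrier G" by (simp add: char_center_def)
      have "cmod (chi G \<rho> g) = real n" using g chi_one[OF rep] by (simp add: char_center_def)
      then have "chi G \<rho> g \<noteq> 0" using rep_pos[OF rep] by auto
      then show "g \<in> eps_aux G (Suc i)" using nz gc by auto
    qed
    have "\<forall>g\<in>carrier G - char_center G (chi G \<rho>). chi G \<rho> g = 0"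
      using nz sub1 by blast
    then show ?thesis using sub1 sub2 by blast
  qed
qed

end
end


context group begin

lemma lift_irrep: assumes N: "N \<lhd> G" and irr: "is_irrep (G Mod N) n \<rho>"
  shows "is_irrep G n (\<lambda>g. \<rho> (N #> g))"
proof -
  have Nc: "N \<subseteq> carrier G" using N normal_imp_subgroup subgroup.subset by blast
  have rep: "is_rep (G Mod N) n \<rho>" using irr unfolding is_irrep_def by auto
  have inc: "N #> g \<in> carrier (G Mod N)" if "g \<in> carrier G" for g
    using that by (simp add: carrier_FactGroup)
  have isrep: "is_rep G n (\<lambda>g. \<rho> (N #> g))"
    unfolding is_rep_def
  proof (intro conjI ballI)
    show "n > 0" using rep unfolding is_rep_def by auto
    fix g assume "g \<in> carrier G"
    then show "\<rho> (N #> g) \<in> carrier_mat n n" using rep inc unfolding is_rep_def by auto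
  next
    show "\<rho> (N #> \<one>) = 1\<^sub>m n" using rep Nc unfolding is_rep_def by simp
  next
    fix x y assume x: "x \<in> carrier G" and y: "y \<in> carrier G"
    have "\<rho> (N #> (x \<otimes> y)) = \<rho> ((N #> x) <#> (N #> y))"
      using normal.rcos_sum[OF N x y] by simp
    also have "\<dots> = \<rho> (N #> x) * \<rho> (N #> y)"
      using rep inc[OF x] inc[OF y] unfolding is_rep_def by simp
    finally show "\<rho> (N #> (x \<otimes> y)) = \<rho> (N #> x) * \<rho> (N #> y)" .
  qed
  show ?thesis
    unfolding is_irrep_def
  proof (intro conjI allI impI)
    show "is_rep G n (\<lambda>g. \<rho> (N #> g))" by (rule isrep)
    fix W assume W: "is_subspace n W \<and> (\<forall>g\<in>carrier G. \<forall>w\<in>W. \<rho> (N #> g) *\<^sub>v w \<in> W)"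
    have "\<forall>C\<in>carrier (G Mod N). \<forall>w\<in>W. \<rho> C *\<^sub>v w \<in> W"
      using W by (auto simp: carrier_FactGroup)
    then show "W = {0\<^sub>v n} \<or> W = carrier_vec n" using irr W unfolding is_irrep_def by blast
  qed
qed

context
  assumes fin: "finite (carrier G)"
begin

lemma quotient_char: assumes H: "H \<subseteq> carrier G" and \<chi>: "\<chi> \<in> Irr (G Mod (comm_sub G H (carrier G)))"
  and ih: "\<And>n \<rho>. is_irrep G n \<rho> \<Longrightarrow> comm_sub G H (carrier G) \<subseteq> char_kernel G (chi G \<rho>) \<Longrightarrow>
     \<exists>j. char_center G (chi G \<rho>) = eps_aux G j \<and>
      (\<forall>g\<in>carrier G - char_center G (chi G \<rho>). chi G \<rho> g = 0)"
  shows "\<exists>j. (\<forall>g\<in>carrier G. (comm_sub G H (carrier G) #> g \<in> char_center (G Mod (comm_sub G H (carrier G))) \<chi>)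
              = (g \<in> eps_aux G j))
         \<and> (\<forall>C\<in>carrier (G Mod (comm_sub G H (carrier G))) - char_center (G Mod (comm_sub G H (carrier G))) \<chi>. \<chi> C = 0)"
proof -
  let ?N = "comm_sub G H (carrier G)"
  have N: "?N \<lhd> G" by (rule comm_sub_normal[OF H])
  have Nsg: "subgroup ?N G" using N normal_imp_subgroup by blast
  have Nc: "?N \<subseteq> carrier G" using Nsg subgroup.subset by blast
  obtain n \<rho> where irr: "is_irrep (G Mod ?N) n \<rho>" and chi: "\<chi> = chi (G Mod ?N) \<rho>"
    using \<chi> by (rule IrrE)
  let ?r = "\<lambda>g. \<rho> (?N #> g)"
  have irr': "is_irrep G n ?r" by (rule lift_irrep[OF N irr])
  have inc: "?N #> g \<in> carrier (G Mod ?N)" if "g \<in> carrier G" for g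
    using that by (simp add: carrier_FactGroup)
  have val: "\<chi> (?N #> g) = chi G ?r g" if "g \<in> carrier G" for g
    using that inc[OF that] by (simp add: chi chi_def)
  have one: "\<chi> ?N = chi G ?r \<one>"
    using val[of "\<one>"] Nc by simp
  have ker: "?N \<subseteq> char_kernel G (chi G ?r)"
  proof
    fix x assume x: "x \<in> ?N"
    then have xc: "x \<in> carrier G" using Nc by auto
    have "?N #> x = ?N" by (rule coset_join2[OF xc Nsg x])
    then have "chi G ?r x = chi G ?r \<one>" using val[OF xc] one by simp
    then show "x \<in> char_kernel G (chi G ?r)" using xc by (simp add: char_kernel_def)
  qed
  obtain j where j: "char_center G (chi G ?r) = eps_aux G j"
    and van: "\<forall>g\<in>carrier G - char_center G (chi G ?r). chi G ?r g = 0"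
    using ih[OF irr' ker] by blast
  have cen: "(?N #> g \<in> char_center (G Mod ?N) \<chi>) = (g \<in> char_center G (chi G ?r))"
    if g: "g \<in> carrier G" for g
    using inc[OF g] val[OF g] one g by (simp add: char_center_def)
  have "\<forall>g\<in>carrier G. (?N #> g \<in> char_center (G Mod ?N) \<chi>) = (g \<in> eps_aux G j)"
    using cen j by simp
  moreover have "\<forall>C\<in>carrier (G Mod ?N) - char_center (G Mod ?N) \<chi>. \<chi> C = 0"
  proof
    fix C assume C: "C \<in> carrier (G Mod ?N) - char_center (G Mod ?N) \<chi>"
    then obtain g where g: "g \<in> carrier G" and Cg: "C = ?N #> g" by (auto simp: carrier_FactGroup)
    then have "g \<notin> char_center G (chi G ?r)" using C cen by auto
    then show "\<chi> C = 0" using van g Cg val by auto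
  qed
  ultimately show ?thesis by blast
qed

theorem part_A: assumes "i \<ge> 1"
  shows "nested_group (G Mod (comm_sub G (eps G i) (carrier G))) \<and>
         GVZ_group (G Mod (comm_sub G (eps G i) (carrier G)))"
proof -
  let ?H = "eps_aux G (i - 1)"
  let ?N = "comm_sub G ?H (carrier G)"
  have e: "eps G i = ?H" by (simp add: eps_def)
  have H: "?H \<subseteq> carrier G" by (rule eps_aux_carrier)
  have ih: "\<exists>j. char_center G (chi G \<rho>) = eps_aux G j \<and>
      (\<forall>g\<in>carrier G - char_center G (chi G \<rho>). chi G \<rho> g = 0)"
    if "is_irrep G n \<rho>" "?N \<subseteq> char_kernel G (chi G \<rho>)" for n \<rho>
    using core[OF fin that] by blast
  have Q: "\<exists>j. (\<forall>g\<in>carrier G. (?N #> g \<in> char_center (G Mod ?N) \<chi>) = (g \<in> eps_aux G j))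
         \<and> (\<forall>C\<in>carrier (G Mod ?N) - char_center (G Mod ?N) \<chi>. \<chi> C = 0)"
    if "\<chi> \<in> Irr (G Mod ?N)" for \<chi>
    by (rule quotient_char[OF H that ih])
  have nested: "nested_group (G Mod ?N)"
    unfolding nested_group_def
  proof (intro ballI)
    fix \<chi> \<psi> assume c: "\<chi> \<in> Irr (G Mod ?N)" and p: "\<psi> \<in> Irr (G Mod ?N)"
    obtain j1 where j1: "\<forall>g\<in>carrier G. (?N #> g \<in> char_center (G Mod ?N) \<chi>) = (g \<in> eps_aux G j1)"
      using Q[OF c] by blast
    obtain j2 where j2: "\<forall>g\<in>carrier G. (?N #> g \<in> char_center (G Mod ?N) \<psi>) = (g \<in> eps_aux G j2)"
      using Q[OF p] by blast
    have sub: "char_center (G Mod ?N) \<alpha> \<subseteq> char_center (G Mod ?N) \<beta>"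
      if a: "\<forall>g\<in>carrier G. (?N #> g \<in> char_center (G Mod ?N) \<alpha>) = (g \<in> eps_aux G k1)"
      and b: "\<forall>g\<in>carrier G. (?N #> g \<in> char_center (G Mod ?N) \<beta>) = (g \<in> eps_aux G k2)"
      and s: "eps_aux G k1 \<subseteq> eps_aux G k2" for \<alpha> \<beta> k1 k2
    proof
      fix C assume C: "C \<in> char_center (G Mod ?N) \<alpha>"
      then have "C \<in> carrier (G Mod ?N)" by (simp add: char_center_def)
      then obtain g where g: "g \<in> carrier G" and Cg: "C = ?N #> g" by (auto simp: carrier_FactGroup)
      show "C \<in> char_center (G Mod ?N) \<beta>" using a b s g C Cg by blast
    qed
    show "char_center (G Mod ?N) \<chi> \<subseteq> char_center (G Mod ?N) \<psi> \<or>
          char_center (G Mod ?N) \<psi> \<subseteq> char_center (G Mod ?N) \<chi>"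
      using eps_comparable[of j1 j2] sub[OF j1 j2] sub[OF j2 j1] by blast
  qed
  have gvz: "GVZ_group (G Mod ?N)"
    unfolding GVZ_group_def using Q by blast
  show ?thesis using nested gvz e by simp
qed


lemma generate_empty: "generate G {} = {\<one>}"
proof
  show "generate G {} \<subseteq> {\<one>}"
  proof
    fix x assume "x \<in> generate G {}"
    then show "x \<in> {\<one>}" by (induction rule: generate.induct) auto
  qed
  show "{\<one>} \<subseteq> generate G {}" by (auto intro: generate.one)
qed

lemma comm_sub_one_ker: assumes rep: "is_rep G n \<rho>"
  shows "comm_sub G {\<one>} (carrier G) \<subseteq> char_kernel G (chi G \<rho>)"
proof -
  have "comms {\<one>} \<subseteq> {g \<in> carrier G. \<rho> g = 1\<^sub>m n}"
    using rep_one[OF rep] by (auto simp: comms_def)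
  then have "comm_sub G {\<one>} (carrier G) \<subseteq> {g \<in> carrier G. \<rho> g = 1\<^sub>m n}"
    unfolding comm_sub_eq by (rule generate_subgroup_incl[OF _ kernel_subgroup[OF rep]])
  then show ?thesis using kernel_iff[OF fin rep] by blast
qed

lemma B_if: assumes "eps_inf G = {\<one>}"
  shows "nested_group G \<and> GVZ_group G"
proof -
  define k where "k = (LEAST k. eps_aux G (Suc k) = eps_aux G k)"
  have ek: "eps_aux G k = {\<one>}" using assms by (simp add: eps_inf_def k_def)
  have Q: "\<exists>j. char_center G \<chi> = eps_aux G j \<and> (\<forall>g\<in>carrier G - char_center G \<chi>. \<chi> g = 0)"
    if \<chi>: "\<chi> \<in> Irr G" for \<chi>
  proof -
    obtain n \<rho> where irr: "is_irrep G n \<rho>" and c: "\<chi> = chi G \<rho>" using \<chi> by (rule IrrE)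
    have rep: "is_rep G n \<rho>" using irr unfolding is_irrep_def by auto
    have "comm_sub G (eps_aux G k) (carrier G) \<subseteq> char_kernel G (chi G \<rho>)"
      using comm_sub_one_ker[OF rep] ek by simp
    from core[OF fin irr this] obtain j where
      "char_center G (chi G \<rho>) = eps_aux G j"
      "\<forall>g\<in>carrier G - char_center G (chi G \<rho>). chi G \<rho> g = 0" by blast
    then show ?thesis unfolding c by blast
  qed
  have Q1: "\<exists>j. char_center G \<chi> = eps_aux G j" if "\<chi> \<in> Irr G" for \<chi>
    using Q[OF that] by blast
  have Q2: "\<forall>g\<in>carrier G - char_center G \<chi>. \<chi> g = 0" if "\<chi> \<in> Irr G" for \<chi>
    using Q[OF that] by blast
  have "nested_group G"
    unfolding nested_group_def
  proof (intro ballI)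
    fix \<chi> \<psi> assume a: "\<chi> \<in> Irr G" and b: "\<psi> \<in> Irr G"
    obtain j1 where 1: "char_center G \<chi> = eps_aux G j1" using Q1[OF a] by blast
    obtain j2 where 2: "char_center G \<psi> = eps_aux G j2" using Q1[OF b] by blast
    show "char_center G \<chi> \<subseteq> char_center G \<psi> \<or> char_center G \<psi> \<subseteq> char_center G \<chi>"
      unfolding 1 2 by (rule eps_comparable)
  qed
  moreover have "GVZ_group G" unfolding GVZ_group_def using Q2 by simp
  ultimately show ?thesis by simp
qed

lemma stabilizes: "\<exists>k. eps_aux G (Suc k) = eps_aux G k"
proof (rule ccontr)
  assume "\<not> ?thesis"
  then have ne: "\<And>k. eps_aux G (Suc k) \<noteq> eps_aux G k" by blast
  have fk: "finite (eps_aux G k)" for k using finite_subset[OF eps_aux_carrier fin] .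
  have b: "card (eps_aux G k) + k \<le> card (carrier G)" for k
  proof (induction k)
    case 0 then show ?case by simp
  next
    case (Suc k)
    have "eps_aux G (Suc k) \<subset> eps_aux G k" using eps_dec[of k] ne[of k] by blast
    then have "card (eps_aux G (Suc k)) < card (eps_aux G k)" using psubset_card_mono fk by blast
    then show ?case using Suc by simp
  qed
  from b[of "Suc (card (carrier G))"] show False by simp
qed

lemma B_only_if: assumes nest: "nested_group G" and gvz: "GVZ_group G"
  shows "eps_inf G = {\<one>}"
proof -
  define k where "k = (LEAST k. eps_aux G (Suc k) = eps_aux G k)"
  have st: "eps_aux G (Suc k) = eps_aux G k"
    unfolding k_def by (rule LeastI_ex[OF stabilizes])
  define E where "E = eps_aux G k"
  have EI: "eps_inf G = E" unfolding eps_inf_def E_def k_def by (rule refl)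
  let ?M = "comm_sub G E (carrier G)"
  let ?S = "{g \<in> carrier G. \<exists>\<chi> \<in> Irr_rel G ?M. \<chi> g \<noteq> 0}"
  have "V_rel G ?M = E" using st unfolding E_def eps_aux.simps .
  then have EV: "E = generate G ?S" unfolding V_rel_def by simp
  show ?thesis
  proof (cases "Irr_rel G ?M = {}")
    case True
    then have "?S = {}" by blast
    then have "E = generate G {}" using EV by (simp only:)
    then show ?thesis using EI generate_empty by simp
  next
    case False
    let ?F = "char_center G ` Irr_rel G ?M"
    have "?F \<subseteq> Pow (carrier G)" by (auto simp: char_center_def)
    moreover have "finite (Pow (carrier G))" using fin by simp
    ultimately have finF: "finite ?F" by (rule finite_subset)
    have "?F \<noteq> {}" using False by blast
    from finite_has_maximal[OF finF this] obtain \<chi>0 where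
      c0: "\<chi>0 \<in> Irr_rel G ?M" and mx: "\<forall>b\<in>?F. char_center G \<chi>0 \<subseteq> b \<longrightarrow> char_center G \<chi>0 = b"
      by blast
    have IrrRel: "Irr_rel G ?M \<subseteq> Irr G" by (auto simp: Irr_rel_def)
    have le0: "char_center G \<chi> \<subseteq> char_center G \<chi>0" if "\<chi> \<in> Irr_rel G ?M" for \<chi>
    proof -
      have A: "\<chi> \<in> Irr G" "\<chi>0 \<in> Irr G" using IrrRel that c0 by auto
      then have "char_center G \<chi> \<subseteq> char_center G \<chi>0 \<or> char_center G \<chi>0 \<subseteq> char_center G \<chi>"
        using nest unfolding nested_group_def by blast
      moreover have "char_center G \<chi> \<in> ?F" using that by blast
      ultimately show ?thesis using mx by blast
    qed
    have S0: "?S \<subseteq> char_center G \<chi>0"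
    proof
      fix g assume "g \<in> ?S"
      then obtain \<chi> where g: "g \<in> carrier G" and c: "\<chi> \<in> Irr_rel G ?M" and nz: "\<chi> g \<noteq> 0" by blast
      have "\<chi> \<in> Irr G" using IrrRel c by auto
      then have "\<forall>g\<in>carrier G - char_center G \<chi>. \<chi> g = 0" using gvz unfolding GVZ_group_def by blast
      then have "g \<in> char_center G \<chi>" using g nz by blast
      then show "g \<in> char_center G \<chi>0" using le0[OF c] by blast
    qed
    obtain n \<rho> where irr: "is_irrep G n \<rho>" and c0e: "\<chi>0 = chi G \<rho>"
    proof -
      have "\<chi>0 \<in> Irr G" using IrrRel c0 by blast
      then show ?thesis using IrrE that by blast
    qed
    have rep: "is_rep G n \<rho>" using irr unfolding is_irrep_def by auto
    have "?S \<subseteq> {g \<in> carrier G. \<exists>c. \<rho> g = c \<cdot>\<^sub>m 1\<^sub>m n}"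
    proof
      fix g assume "g \<in> ?S"
      then have "g \<in> char_center G (chi G \<rho>)" using S0 c0e by blast
      then show "g \<in> {g \<in> carrier G. \<exists>c. \<rho> g = c \<cdot>\<^sub>m 1\<^sub>m n}"
        unfolding center_iff[OF fin rep] by blast
    qed
    then have "generate G ?S \<subseteq> {g \<in> carrier G. \<exists>c. \<rho> g = c \<cdot>\<^sub>m 1\<^sub>m n}"
      by (rule generate_subgroup_incl[OF _ scalar_subgroup[OF rep]])
    then have Esc: "E \<subseteq> {g \<in> carrier G. \<exists>c. \<rho> g = c \<cdot>\<^sub>m 1\<^sub>m n}"
      by (subst EV)
    have "comms E \<subseteq> {g \<in> carrier G. \<rho> g = 1\<^sub>m n}"
    proof
      fix x assume "x \<in> comms E"
      then obtain a b where a: "a \<in> E" and b: "b \<in> carrier G" and x: "x = inv a \<otimes> inv b \<otimes> a \<otimes> b"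
        unfolding comms_def by blast
      obtain c where ac: "a \<in> carrier G" and c: "\<rho> a = c \<cdot>\<^sub>m 1\<^sub>m n" using Esc a by blast
      show "x \<in> {g \<in> carrier G. \<rho> g = 1\<^sub>m n}"
        using rep_trivial_of_scalar[OF rep ac b c] x ac b by simp
    qed
    then have "?M \<subseteq> {g \<in> carrier G. \<rho> g = 1\<^sub>m n}"
      unfolding comm_sub_eq by (rule generate_subgroup_incl[OF _ kernel_subgroup[OF rep]])
    then have "?M \<subseteq> char_kernel G \<chi>0" unfolding c0e using kernel_iff[OF fin rep] by blast
    with c0 have False unfolding Irr_rel_def by blast
    then show ?thesis ..
  qed
qed

end
end

theorem theoremJ:
  fixes G :: "('g, 'b) monoid_scheme"
  assumes "group G" and "finite (carrier G)"
  shows "(\<forall>i::nat. i \<ge> 1 \<longrightarrow>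
            nested_group (G Mod (comm_sub G (eps G i) (carrier G))) \<and>
            GVZ_group (G Mod (comm_sub G (eps G i) (carrier G))))
       \<and> ((nested_group G \<and> GVZ_group G) \<longleftrightarrow> eps_inf G = {\<one>\<^bsub>G\<^esub>})"
proof -
  interpret group G by fact
  show ?thesis using part_A[OF assms(2)] B_if[OF assms(2)] B_only_if[OF assms(2)] by blast
qed

end
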